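(* Let $X$ be a Dedekind complete Riesz space and $(x_{n})$ a sequence in $X^{u}_{+}$. Assume $\sum_{n=1}^{\infty}x_{n}=\infty_{B}+u$ where $B$ is a band of $X$ and $u\in X^u$, $u\perp B$, and let $R_{n}=\sum_{k=n}^{\infty}x_{k}$. Then for every $y\in X_{+}$, $$Py=\lim_{n\to\infty}(y\wedge R_{n})\quad(\text{order limit}),$$ where $P$ is the band projection onto $B$.
   Context: $X^{u}$ is the universal completion of $X$. The sup-completion $X^{s}$ of $X$ is the set of classes of nonempty upward directed subsets of $X$ under $A\sim B$ iff $\sup_{a\in A}(x\wedge a)=\sup_{b\in B}(x\wedge b)$ for all $x\in X$, with induced operations and order; it is a lattice-ordered cone containing $X$ and $X^u_+$ in which every nonempty subset has a supremum. Infinite sums of positive elements are suprema of partial sums in $X^{s}$. For a band $B$ of $X$, $\infty_{B}$ is the supremum of $B$ in $X^{s}$. *)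

theory Defs
  imports Complex_Main
begin

text \<open>Riesz spaces are modelled as types of class ordered_real_vector + lattice.
  The universal completion X^u is the ambient type 'u (a universally complete Riesz space:
  Dedekind complete via conditionally_complete_lattice, plus lateral completeness);
  X is a subset of it (an order dense Riesz subspace).\<close>

definition rabs :: "'u::{ordered_real_vector, lattice} \<Rightarrow> 'u" where
  "rabs v = sup v (- v)"

definition disj :: "'u::{ordered_real_vector, lattice} \<Rightarrow> 'u \<Rightarrow> bool" where
  "disj v w \<longleftrightarrow> inf (rabs v) (rabs w) = 0"

definition laterally_complete :: "'u::{ordered_real_vector, conditionally_complete_lattice} set \<Rightarrow> bool" where
  "laterally_complete U \<longleftrightarrow>
     (\<forall>D. D \<subseteq> U \<and> (\<forall>d\<in>D. 0 \<le> d) \<and> (\<forall>d\<in>D. \<forall>e\<in>D. d \<noteq> e \<longrightarrow> disj d e)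
          \<longrightarrow> bdd_above D)"

definition riesz_subspace :: "'u::{ordered_real_vector, lattice} set \<Rightarrow> bool" where
  "riesz_subspace X \<longleftrightarrow> 0 \<in> X \<and> (\<forall>a\<in>X. \<forall>b\<in>X. a + b \<in> X) \<and>
     (\<forall>c. \<forall>a\<in>X. c *\<^sub>R a \<in> X) \<and> (\<forall>a\<in>X. \<forall>b\<in>X. sup a b \<in> X)"

definition order_dense :: "'u::{ordered_real_vector, lattice} set \<Rightarrow> bool" where
  "order_dense X \<longleftrightarrow> (\<forall>v. 0 < v \<longrightarrow> (\<exists>x\<in>X. 0 < x \<and> x \<le> v))"

definition universal_completion_of :: "'u::{ordered_real_vector, conditionally_complete_lattice} set \<Rightarrow> bool" where
  "universal_completion_of X \<longleftrightarrow> riesz_subspace X \<and> order_dense X \<and> laterally_complete (UNIV :: 'u set)"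

definition is_lub_in :: "'u::order set \<Rightarrow> 'u set \<Rightarrow> 'u \<Rightarrow> bool" where
  "is_lub_in X D s \<longleftrightarrow> s \<in> X \<and> (\<forall>d\<in>D. d \<le> s) \<and> (\<forall>t\<in>X. (\<forall>d\<in>D. d \<le> t) \<longrightarrow> s \<le> t)"

definition dedekind_complete_in :: "'u::order set \<Rightarrow> bool" where
  "dedekind_complete_in X \<longleftrightarrow>
     (\<forall>D. D \<subseteq> X \<and> D \<noteq> {} \<and> (\<exists>b\<in>X. \<forall>d\<in>D. d \<le> b) \<longrightarrow> (\<exists>s. is_lub_in X D s))"

definition band_of :: "'u::{ordered_real_vector, lattice} set \<Rightarrow> 'u set \<Rightarrow> bool" where
  "band_of X B \<longleftrightarrow> B \<subseteq> X \<and> 0 \<in> B \<and> (\<forall>a\<in>B. \<forall>b\<in>B. a + b \<in> B) \<and> (\<forall>c. \<forall>a\<in>B. c *\<^sub>R a \<in> B) \<and>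
     (\<forall>x\<in>X. \<forall>b\<in>B. rabs x \<le> rabs b \<longrightarrow> x \<in> B) \<and>
     (\<forall>D s. D \<subseteq> B \<and> is_lub_in X D s \<longrightarrow> s \<in> B)"

definition disj_compl :: "'u::{ordered_real_vector, lattice} set \<Rightarrow> 'u set \<Rightarrow> 'u set" where
  "disj_compl X B = {x \<in> X. \<forall>b\<in>B. disj x b}"

definition band_projection :: "'u::{ordered_real_vector, lattice} set \<Rightarrow> 'u set \<Rightarrow> ('u \<Rightarrow> 'u) \<Rightarrow> bool" where
  "band_projection X B P \<longleftrightarrow> (\<forall>x\<in>X. P x \<in> B \<and> x - P x \<in> disj_compl X B)"

text \<open>Sup-completion X^s: elements are represented by nonempty upward directed subsets of X,
  equality in X^s is the equivalence relation sc_eq.\<close>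
definition up_directed :: "'u::order set \<Rightarrow> bool" where
  "up_directed A \<longleftrightarrow> A \<noteq> {} \<and> (\<forall>a\<in>A. \<forall>b\<in>A. \<exists>c\<in>A. a \<le> c \<and> b \<le> c)"

definition sc_eq :: "'u::{ordered_real_vector, conditionally_complete_lattice} set \<Rightarrow> 'u set \<Rightarrow> 'u set \<Rightarrow> bool" where
  "sc_eq X A C \<longleftrightarrow> A \<subseteq> X \<and> C \<subseteq> X \<and> up_directed A \<and> up_directed C \<and>
     (\<forall>x\<in>X. Sup ((\<lambda>a. inf x a) ` A) = Sup ((\<lambda>c. inf x c) ` C))"

text \<open>Embedding of X^u_+ (and of X) into X^s.\<close>
definition sc_emb :: "'u::order set \<Rightarrow> 'u \<Rightarrow> 'u set" where
  "sc_emb X v = {x \<in> X. x \<le> v}"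

definition sc_plus :: "'u::plus set \<Rightarrow> 'u set \<Rightarrow> 'u set" where
  "sc_plus A C = {a + c | a c. a \<in> A \<and> c \<in> C}"

definition sc_inf :: "'u::lattice set \<Rightarrow> 'u set \<Rightarrow> 'u set" where
  "sc_inf A C = {inf a c | a c. a \<in> A \<and> c \<in> C}"

text \<open>\<infinity>_B, the supremum of the band B in X^s, is represented by B itself.\<close>
definition sc_infty :: "'u set \<Rightarrow> 'u set" where
  "sc_infty B = B"

text \<open>The tail sum \<Sum>_{k\<ge>n} f k in X^s: the supremum of the increasing partial sums,
  represented by the union of the representatives of the partial sums.\<close>
definition sc_tail_sum :: "'u::{ordered_real_vector, lattice} set \<Rightarrow> (nat \<Rightarrow> 'u) \<Rightarrow> nat \<Rightarrow> 'u set" where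
  "sc_tail_sum X f n = (\<Union>N. sc_emb X (\<Sum>k\<in>{n..N}. f k))"

definition order_conv :: "(nat \<Rightarrow> 'u::{ordered_real_vector, conditionally_complete_lattice}) \<Rightarrow> 'u \<Rightarrow> bool" where
  "order_conv z l \<longleftrightarrow> (\<exists>p. decseq p \<and> (\<forall>n. 0 \<le> p n) \<and> Inf (range p) = 0 \<and>
      (\<forall>n. rabs (z n - l) \<le> p n))"

end

theory Submission
  imports Defs
begin


lemma inf_neg: "inf a b = - sup (-a) (-(b::'a::{ordered_ab_group_add, lattice}))"
proof (rule antisym)
  have "sup (-a) (-b) \<le> - inf a b" by simp
  then show "inf a b \<le> - sup (- a) (- b)"
    by (metis le_minus_iff)
  show "- sup (- a) (- b) \<le> inf a b"
    by (simp add: minus_le_iff)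
qed

lemma add_inf_right: "inf a b + (c::'a::{ordered_ab_group_add, lattice}) = inf (a+c) (b+c)"
proof (rule antisym)
  show "inf a b + c \<le> inf (a + c) (b + c)" by (simp add: add_right_mono)
  have "inf (a + c) (b + c) - c \<le> inf a b"
    by (simp add: diff_le_eq)
  then show "inf (a + c) (b + c) \<le> inf a b + c" by (metis diff_le_eq)
qed

lemma add_sup_right: "sup a b + (c::'a::{ordered_ab_group_add, lattice}) = sup (a+c) (b+c)"
proof (rule antisym)
  show "sup (a + c) (b + c) \<le> sup a b + c" by (simp add: add_right_mono)
  have "a \<le> sup (a + c) (b + c) - c" by (simp add: le_diff_eq)
  moreover have "b \<le> sup (a + c) (b + c) - c" by (simp add: le_diff_eq)
  ultimately have "sup a b \<le> sup (a + c) (b + c) - c" by (rule le_supI)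
  hence "sup a b + c \<le> sup (a + c) (b + c) - c + c" by (rule add_right_mono)
  then show "sup a b + c \<le> sup (a + c) (b + c)" by (metis diff_add_cancel)
qed

lemma diff_inf_right: "inf a b - (c::'a::{ordered_ab_group_add, lattice}) = inf (a-c) (b-c)"
  using add_inf_right[of a b "-c"] by simp

lemma diff_sup_right: "sup a b - (c::'a::{ordered_ab_group_add, lattice}) = sup (a-c) (b-c)"
  using add_sup_right[of a b "-c"] by simp

lemma minus_inf: "p - inf p q = sup (p - q) (0::'a::{ordered_ab_group_add, lattice})"
proof -
  have "p - inf p q = p + sup (-p) (-q)" by (simp add: inf_neg)
  also have "... = sup (-p) (-q) + p" by (simp add: add.commute)
  also have "... = sup 0 (p - q)" by (simp add: add_sup_right)
  finally show ?thesis by (simp add: sup.commute)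
qed

lemma split_inf: "a = inf x a + sup (a - x) (0::'a::{ordered_ab_group_add, lattice})"
proof -
  have "a - inf a x = sup (a-x) 0" by (rule minus_inf)
  hence "a = sup (a-x) 0 + inf a x" by (simp add: diff_eq_eq)
  thus ?thesis by (simp add: inf.commute add.commute)
qed

lemma distrib2: "inf x (sup a b) = sup (inf x a) (inf x (b::'a::{ordered_ab_group_add, lattice}))"
proof (rule antisym)
  define t where "t = sup (inf x a) (inf x b)"
  define s where "s = sup a b"
  have "a \<le> t + sup (s - x) 0"
  proof -
    have "a = inf x a + sup (a - x) 0" by (rule split_inf)
    also have "... \<le> t + sup (s - x) 0"
      unfolding t_def s_def by (intro add_mono sup_mono diff_right_mono order_refl sup_ge1 sup_ge2)
    finally show ?thesis .
  qed
  moreover have "b \<le> t + sup (s - x) 0"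
  proof -
    have "b = inf x b + sup (b - x) 0" by (rule split_inf)
    also have "... \<le> t + sup (s - x) 0"
      unfolding t_def s_def by (intro add_mono sup_mono diff_right_mono order_refl sup_ge1 sup_ge2)
    finally show ?thesis .
  qed
  ultimately have "s \<le> t + sup (s - x) 0" by (simp add: s_def)
  hence "s - sup (s - x) 0 \<le> t" by (simp add: diff_le_eq add.commute)
  moreover have "s - sup (s - x) 0 = inf s x" using minus_inf[of s x] by (simp add: algebra_simps)
  ultimately show "inf x (sup a b) \<le> t" by (simp add: s_def inf.commute)
  show "t \<le> inf x (sup a b)" unfolding t_def by (intro le_supI inf_mono order_refl sup_ge1 sup_ge2)
qed

lemma distrib3: "inf (sup a c) (sup b c) = sup (inf a b) (c::'a::{ordered_ab_group_add, lattice})"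
proof -
  have "inf (sup a c) (sup b c) = sup (inf (sup a c) b) (inf (sup a c) c)" by (rule distrib2)
  also have "inf (sup a c) c = c" by (rule inf.absorb2) simp
  also have "inf (sup a c) b = sup (inf b a) (inf b c)" by (simp add: inf.commute distrib2)
  finally have e: "inf (sup a c) (sup b c) = sup (sup (inf b a) (inf b c)) c" .
  have "sup (sup (inf b a) (inf b c)) c \<le> sup (inf a b) c"
    by (simp add: inf_commute le_supI2)
  moreover have "sup (inf a b) c \<le> sup (sup (inf b a) (inf b c)) c"
    by (simp add: inf_commute le_supI1)
  ultimately show ?thesis using e by (metis antisym)
qed

lemma subadd:
  fixes f s t :: "'a::{ordered_ab_group_add, lattice}"
  assumes "0 \<le> f" "0 \<le> s" "0 \<le> t"
  shows "inf f (s+t) \<le> inf f s + inf f t"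
proof -
  define m where "m = inf f (s+t)"
  have "m - inf f s = sup (-f) (-s) + m" by (simp add: inf_neg)
  also have "... = sup (-f + m) (-s + m)" by (rule add_sup_right)
  also have "... = sup (m - f) (m - s)" by (simp add: add.commute)
  finally have "m - inf f s = sup (m - f) (m - s)" .
  also have "... \<le> sup 0 t"
  proof (rule sup_mono)
    show "m - f \<le> 0" by (simp add: m_def)
    have "m \<le> s + t" by (simp add: m_def)
    thus "m - s \<le> t" by (simp add: diff_le_eq add.commute)
  qed
  also have "... = t" using assms by (simp add: sup.absorb2)
  finally have 1: "m - inf f s \<le> t" .
  have "m - inf f s \<le> m" using assms by (simp add: diff_le_eq)
  also have "m \<le> f" by (simp add: m_def)
  finally have "m - inf f s \<le> inf f t" using 1 by simp
  hence "m \<le> inf f t + inf f s" by (simp only: diff_le_eq)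
  thus ?thesis by (simp only: m_def add.commute)
qed

lemma rabs_nonneg: "0 \<le> rabs (v::'a::{ordered_real_vector, lattice})"
proof -
  have "v + (-v) \<le> rabs v + rabs v" by (rule add_mono) (simp_all add: rabs_def)
  hence "0 \<le> rabs v + rabs v" by simp
  hence "0 \<le> (1/2::real) *\<^sub>R (rabs v + rabs v)" by (rule scaleR_nonneg_nonneg[rotated]) simp
  also have "(1/2::real) *\<^sub>R (rabs v + rabs v) = (1/2 + 1/2::real) *\<^sub>R rabs v"
    by (simp only: scaleR_add_right scaleR_left_distrib)
  also have "... = rabs v" by simp
  finally show ?thesis .
qed

lemma half_nonneg: "0 \<le> x + x \<Longrightarrow> 0 \<le> (x::'a::ordered_real_vector)"
proof -
  assume "0 \<le> x + x"
  hence "0 \<le> (1/2::real) *\<^sub>R (x + x)" by (rule scaleR_nonneg_nonneg[rotated]) simp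
  also have "(1/2::real) *\<^sub>R (x + x) = (1/2 + 1/2::real) *\<^sub>R x"
    by (simp only: scaleR_add_right scaleR_left_distrib)
  also have "... = x" by simp
  finally show ?thesis .
qed

lemma half_nonpos: "x + x \<le> 0 \<Longrightarrow> (x::'a::ordered_real_vector) \<le> 0"
proof -
  assume "x + x \<le> 0"
  hence "0 \<le> -(x + x)" by (simp only: neg_0_le_iff_le)
  hence "0 \<le> -x + -x" by (simp only: minus_add_distrib)
  hence "0 \<le> -x" by (rule half_nonneg)
  thus ?thesis by simp
qed

lemma pos_neg_disj: "inf (sup w 0) (sup (-w) 0) = (0::'a::{ordered_real_vector, lattice})"
proof -
  have "inf w (-w) + inf w (-w) \<le> w + (-w)" by (rule add_mono) simp_all
  hence "inf w (-w) + inf w (-w) \<le> 0" by (simp only: add.right_inverse)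
  hence h: "inf w (-w) \<le> 0" by (rule half_nonpos)
  have "inf (sup w 0) (sup (-w) 0) = sup (inf w (-w)) 0" by (rule distrib3)
  also have "... = 0" using h by (rule sup_absorb2)
  finally show ?thesis .
qed

lemma disj_mult:
  fixes f r :: "'a::{ordered_real_vector, lattice}"
  assumes "0 \<le> f" "0 \<le> r" "inf f r = 0"
  shows "inf f (of_nat k *\<^sub>R r) = 0"
proof (induction k)
  case 0
  then show ?case using assms by (simp add: inf.absorb2)
next
  case (Suc k)
  have kr: "0 \<le> of_nat k *\<^sub>R r" using assms by (simp add: scaleR_nonneg_nonneg)
  have e: "of_nat (Suc k) *\<^sub>R r = r + of_nat k *\<^sub>R r" by (simp add: scaleR_left_distrib)
  have "inf f (r + of_nat k *\<^sub>R r) \<le> inf f r + inf f (of_nat k *\<^sub>R r)"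
    using assms kr by (intro subadd)
  also have "... = 0" using Suc assms by simp
  finally have "inf f (of_nat (Suc k) *\<^sub>R r) \<le> 0" using e by simp
  moreover have "0 \<le> inf f (of_nat (Suc k) *\<^sub>R r)"
    using assms by (simp add: scaleR_nonneg_nonneg)
  ultimately show ?case by (rule antisym)
qed

lemma disj_le_zero:
  fixes f r :: "'a::{ordered_real_vector, lattice}"
  assumes "0 \<le> f" "0 \<le> r" "inf f r = 0" "f \<le> of_nat k *\<^sub>R r"
  shows "f = 0"
proof -
  have "f = inf f (of_nat k *\<^sub>R r)" using assms(4) by (simp add: inf.absorb1)
  thus ?thesis using disj_mult[OF assms(1-3)] by simp
qed

lemma archimedean:
  fixes r A :: "'a::{ordered_real_vector, conditionally_complete_lattice}"
  assumes "0 \<le> r" "\<And>j. of_nat (Suc j) *\<^sub>R r \<le> A"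
  shows "r \<le> 0"
proof -
  define M where "M = range (\<lambda>j::nat. of_nat j *\<^sub>R r)"
  have A0: "0 \<le> A" using assms(1) assms(2)[of 0] by simp
  have bdd: "bdd_above M" unfolding M_def bdd_above_def
  proof (intro exI ballI)
    fix y assume "y \<in> range (\<lambda>j::nat. of_nat j *\<^sub>R r)"
    then obtain j where y: "y = of_nat j *\<^sub>R r" by auto
    show "y \<le> A"
    proof (cases j)
      case 0 then show ?thesis using y A0 by simp
    next
      case (Suc i) then show ?thesis using y assms(2)[of i] by simp
    qed
  qed
  define s where "s = Sup M"
  have "\<And>j. of_nat j *\<^sub>R r \<le> s - r"
  proof -
    fix j :: nat
    have "of_nat (Suc j) *\<^sub>R r \<in> M" unfolding M_def by (rule rangeI)
    hence "of_nat (Suc j) *\<^sub>R r \<le> s" unfolding s_def using bdd by (rule cSup_upper)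
    thus "of_nat j *\<^sub>R r \<le> s - r" by (simp add: scaleR_left_distrib le_diff_eq add.commute)
  qed
  hence "s \<le> s - r" unfolding s_def M_def by (intro cSup_least) auto
  thus ?thesis by (simp add: le_diff_eq)
qed

lemma lemmaK:
  fixes r p a :: "'a::{ordered_real_vector, conditionally_complete_lattice}"
  assumes r0: "0 \<le> r" and rp: "r \<le> p" and h: "\<And>j::nat. r \<le> sup (a - of_nat j *\<^sub>R p) 0"
  shows "r \<le> 0"
proof (rule archimedean[OF r0])
  fix j :: nat
  define A where "A = sup a 0"
  have A0: "0 \<le> A" by (simp add: A_def)
  have aA: "a \<le> A" by (simp add: A_def)
  define jr where "jr = of_nat j *\<^sub>R r"
  have jr0: "0 \<le> jr" using r0 unfolding jr_def by (rule scaleR_nonneg_nonneg[rotated]) simp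
  have "of_nat j *\<^sub>R r \<le> of_nat j *\<^sub>R p" using rp by (rule scaleR_left_mono) simp
  hence "a - of_nat j *\<^sub>R p \<le> A - jr" unfolding jr_def using aA by (intro diff_mono)
  hence "sup (a - of_nat j *\<^sub>R p) 0 \<le> sup (A - jr) 0" by (rule sup_mono) (rule order_refl)
  hence r1: "r \<le> sup (A - jr) 0" using h[of j] by (rule order_trans[rotated])
  define w where "w = inf r (A - jr)"
  have "r = inf r (sup (A - jr) 0)" using r1 by (rule inf.absorb1[symmetric])
  also have "... = sup w (inf r 0)" unfolding w_def by (rule distrib2)
  also have "inf r 0 = 0" using r0 by (rule inf.absorb2)
  finally have rw: "r = sup w 0" .
  have "- jr \<le> w" unfolding w_def
  proof (rule le_infI)
    have "- jr \<le> 0" using jr0 by simp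
    thus "- jr \<le> r" using r0 by (rule order_trans)
    show "- jr \<le> A - jr" using A0 by simp
  qed
  hence "-w \<le> jr" by (metis minus_le_iff)
  hence s1: "sup (-w) 0 \<le> of_nat j *\<^sub>R r" using jr0 unfolding jr_def by (rule le_supI)
  have "inf (sup (-w) 0) (sup w 0) = 0" using pos_neg_disj[of w] by (simp only: inf.commute)
  hence s2: "inf (sup (-w) 0) r = 0" using rw by simp
  have "sup (-w) 0 = 0" by (rule disj_le_zero[OF _ r0 s2 s1]) simp
  hence "-w \<le> 0" by (metis sup_ge1)
  hence "0 \<le> w" by (simp only: neg_le_0_iff_le)
  hence "r = w" using rw by (simp add: sup.absorb1)
  hence "r \<le> A - jr" unfolding w_def by (metis inf.cobounded2)
  thus "of_nat (Suc j) *\<^sub>R r \<le> A" by (simp add: jr_def scaleR_left_distrib le_diff_eq add.commute)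
qed

lemma inf_Sup:
  fixes x :: "'a::{ordered_real_vector, conditionally_complete_lattice}"
  assumes "D \<noteq> {}" "bdd_above D"
  shows "inf x (Sup D) = Sup (inf x ` D)"
proof (rule antisym)
  define t where "t = Sup (inf x ` D)"
  define s where "s = Sup D"
  have bt: "bdd_above (inf x ` D)" by (rule bdd_aboveI[of _ x]) auto
  have "\<And>d. d \<in> D \<Longrightarrow> d \<le> t + sup (s - x) 0"
  proof -
    fix d assume d: "d \<in> D"
    have "d = inf x d + sup (d - x) 0" by (rule split_inf)
    also have "... \<le> t + sup (s - x) 0"
    proof (rule add_mono)
      show "inf x d \<le> t" unfolding t_def using d bt by (intro cSup_upper) auto
      have "d \<le> s" unfolding s_def using d assms by (intro cSup_upper)
      thus "sup (d - x) 0 \<le> sup (s - x) 0" by (intro sup_mono diff_right_mono) simp_all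
    qed
    finally show "d \<le> t + sup (s - x) 0" .
  qed
  hence "s \<le> t + sup (s - x) 0" unfolding s_def using assms by (intro cSup_least) auto
  hence "s - sup (s - x) 0 \<le> t" by (simp add: diff_le_eq add.commute)
  moreover have "s - sup (s - x) 0 = inf s x" using minus_inf[of s x] by (simp add: algebra_simps)
  ultimately show "inf x (Sup D) \<le> t" by (simp add: s_def inf.commute)
  show "t \<le> inf x (Sup D)" unfolding t_def using assms
    by (intro cSup_least) (auto intro: le_infI2 cSup_upper)
qed

lemma Sup_translate:
  fixes m :: "nat \<Rightarrow> 'a::{ordered_real_vector, conditionally_complete_lattice}"
  assumes "bdd_above (range m)"
  shows "Sup (range (\<lambda>N. m N + c)) = Sup (range m) + c"
proof (rule antisym)
  show "Sup (range (\<lambda>N. m N + c)) \<le> Sup (range m) + c"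
    using assms by (intro cSup_least) (auto intro: add_right_mono cSup_upper)
  have bd: "bdd_above (range (\<lambda>N. m N + c))"
    using assms by (auto simp: bdd_above_def intro: add_right_mono)
  have "Sup (range m) \<le> Sup (range (\<lambda>N. m N + c)) - c"
  proof (intro cSup_least)
    fix y assume "y \<in> range m"
    then obtain N where "y = m N" by auto
    moreover have "m N + c \<le> Sup (range (\<lambda>N. m N + c))" using bd by (intro cSup_upper) auto
    ultimately show "y \<le> Sup (range (\<lambda>N. m N + c)) - c" by (simp add: le_diff_eq)
  qed auto
  thus "Sup (range m) + c \<le> Sup (range (\<lambda>N. m N + c))" by (simp add: le_diff_eq)
qed

lemma INFPOS:
  fixes m :: "nat \<Rightarrow> 'a::{ordered_real_vector, conditionally_complete_lattice}"
  assumes h: "\<And>N. r \<le> sup (c - m N) 0" and bd: "bdd_above (range m)"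
  shows "r \<le> sup (c - Sup (range m)) 0"
proof -
  have e: "\<And>v. - sup (c - v) 0 = inf 0 (v - c)"
    by (simp add: inf_neg inf.commute sup.commute)
  have "\<And>N. inf 0 (m N - c) \<le> - r" using h by (metis e neg_le_iff_le)
  have "Sup (range (\<lambda>N. m N + - c)) = Sup (range m) + - c" by (rule Sup_translate[OF bd])
  hence S: "Sup (range (\<lambda>N. m N - c)) = Sup (range m) - c" by simp
  have bd2: "bdd_above (range (\<lambda>N. m N - c))"
    using bd by (auto simp: bdd_above_def intro: diff_right_mono)
  have "inf 0 (Sup (range (\<lambda>N. m N - c))) = Sup (inf 0 ` range (\<lambda>N. m N - c))"
    using bd2 by (intro inf_Sup) auto
  also have "... \<le> - r"
    using \<open>\<And>N. inf 0 (m N - c) \<le> - r\<close> by (intro cSup_least) auto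
  finally have "inf 0 (Sup (range m) - c) \<le> - r" using S by simp
  thus ?thesis by (metis e neg_le_iff_le)
qed




lemma disj_part:
  fixes d a T :: "'a::{ordered_real_vector, conditionally_complete_lattice}"
  assumes d0: "0 \<le> d" and a0: "0 \<le> a" and h: "\<And>k::nat. inf (of_nat k *\<^sub>R d) T \<le> a"
  shows "inf (sup (T - a) 0) d = 0"
proof -
  define e where "e = inf (sup (T - a) 0) d"
  have e0: "0 \<le> e" using d0 by (simp add: e_def)
  have "e \<le> 0"
  proof (rule archimedean[OF e0])
    fix k :: nat
    define K where "K = of_nat (Suc k) *\<^sub>R e"
    have K0: "0 \<le> K" unfolding K_def using e0 by (rule scaleR_nonneg_nonneg[rotated]) simp
    have KD: "K \<le> of_nat (Suc k) *\<^sub>R d" unfolding K_def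
      by (rule scaleR_left_mono) (simp_all add: e_def)
    define f where "f = sup (K - a) 0"
    have f0: "0 \<le> f" by (simp add: f_def)
    have "inf f (sup (T - a) 0) = sup (inf (K - a) (T - a)) 0" unfolding f_def by (rule distrib3)
    also have "inf (K - a) (T - a) = inf K T - a" by (rule diff_inf_right[symmetric])
    also have "inf K T - a \<le> 0"
    proof -
      have "inf K T \<le> inf (of_nat (Suc k) *\<^sub>R d) T" using KD by (rule inf_mono) simp
      also have "... \<le> a" by (rule h)
      finally show ?thesis by simp
    qed
    hence "sup (inf K T - a) 0 = 0" by (rule sup_absorb2)
    finally have f1: "inf f (sup (T - a) 0) = 0" .
    have "inf f e \<le> inf f (sup (T - a) 0)" unfolding e_def by (rule inf_mono) simp_all
    hence "inf f e \<le> 0" using f1 by simp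
    moreover have "0 \<le> inf f e" using f0 e0 by (rule le_infI)
    ultimately have f2: "inf f e = 0" by (rule antisym)
    have "K - a \<le> K" using a0 by simp
    hence "f \<le> K" unfolding f_def using K0 by (rule le_supI)
    hence "f \<le> of_nat (Suc k) *\<^sub>R e" by (simp add: K_def)
    hence "f = 0" by (rule disj_le_zero[OF f0 e0 f2])
    hence "K - a \<le> 0" unfolding f_def by (metis sup_ge1)
    thus "of_nat (Suc k) *\<^sub>R e \<le> a" unfolding K_def by simp
  qed
  hence "e = 0" using e0 by (rule antisym)
  thus ?thesis by (simp add: e_def)
qed

lemma dpart_bound:
  fixes d Sn Q a :: "'a::{ordered_real_vector, lattice}"
  assumes d0: "0 \<le> d" and S0: "0 \<le> Sn" and h: "inf (sup (Q + Sn - a) 0) d = 0"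
  shows "inf d Sn \<le> sup (a - Q) 0"
proof -
  define T where "T = Q + Sn"
  define e where "e = sup (T - a) 0"
  have "T = inf a T + e" unfolding e_def by (rule split_inf)
  hence "Sn = (inf a T - Q) + e" unfolding T_def by (simp add: algebra_simps)
  also have "inf a T - Q \<le> sup (a - Q) 0" by (simp add: diff_right_mono le_supI1)
  finally have "Sn \<le> sup (a - Q) 0 + e" by simp
  hence "inf d Sn \<le> inf d (sup (a - Q) 0 + e)" by (rule inf_mono[OF order_refl])
  also have "... \<le> inf d (sup (a - Q) 0) + inf d e" using d0 by (intro subadd) (simp_all add: e_def)
  also have "inf d e = 0" using h by (simp add: e_def T_def inf.commute)
  finally show ?thesis by (simp add: le_infI2)
qed

locale ctx =
  fixes X B :: "'u::{ordered_real_vector, conditionally_complete_lattice} set"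
    and x :: "nat \<Rightarrow> 'u" and u :: 'u and P :: "'u \<Rightarrow> 'u"
  assumes uc: "universal_completion_of X"
    and dc: "dedekind_complete_in X"
    and xpos: "\<forall>n. 0 \<le> x n"
    and band: "band_of X B"
    and udisj: "\<forall>b\<in>B. disj u b"
    and H: "sc_eq X (sc_tail_sum X x 0) (sc_plus (sc_infty B) (sc_emb X u))"
    and PP: "band_projection X B P"
begin

lemma RS: "riesz_subspace X" using uc unfolding universal_completion_of_def by simp
lemma OD: "order_dense X" using uc unfolding universal_completion_of_def by simp

lemma X0: "0 \<in> X" using RS unfolding riesz_subspace_def by simp
lemma Xadd: "a \<in> X \<Longrightarrow> b \<in> X \<Longrightarrow> a + b \<in> X" using RS unfolding riesz_subspace_def by simp
lemma Xscale: "a \<in> X \<Longrightarrow> c *\<^sub>R a \<in> X" using RS unfolding riesz_subspace_def by simp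
lemma Xsup: "a \<in> X \<Longrightarrow> b \<in> X \<Longrightarrow> sup a b \<in> X" using RS unfolding riesz_subspace_def by simp
lemma Xneg: "a \<in> X \<Longrightarrow> - a \<in> X" using Xscale[of a "-1"] by simp
lemma Xdiff: "a \<in> X \<Longrightarrow> b \<in> X \<Longrightarrow> a - b \<in> X" using Xadd[of a "-b"] Xneg[of b] by simp
lemma Xinf: "a \<in> X \<Longrightarrow> b \<in> X \<Longrightarrow> inf a b \<in> X" by (simp add: inf_neg Xneg Xsup)

lemma regular:
  assumes "D \<subseteq> X" "D \<noteq> {}" "y \<in> X" "\<forall>d\<in>D. d \<le> y"
  shows "Sup D \<in> X"
proof -
  from dc assms obtain s where s: "is_lub_in X D s" unfolding dedekind_complete_in_def by blast
  have sX: "s \<in> X" and ub: "\<forall>d\<in>D. d \<le> s" and least: "\<forall>t\<in>X. (\<forall>d\<in>D. d \<le> t) \<longrightarrow> s \<le> t"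
    using s unfolding is_lub_in_def by auto
  have bdd: "bdd_above D" using assms(4) by (auto simp: bdd_above_def)
  have le: "Sup D \<le> s" using ub assms(2) by (intro cSup_least) auto
  show ?thesis
  proof (cases "Sup D = s")
    case True thus ?thesis using sX by simp
  next
    case False
    hence "0 < s - Sup D" using le by (simp add: less_le)
    then obtain e where e: "e \<in> X" "0 < e" "e \<le> s - Sup D" using OD unfolding order_dense_def by blast
    have "s - e \<in> X" using sX e by (simp add: Xdiff)
    moreover have "\<forall>d\<in>D. d \<le> s - e"
    proof
      fix d assume "d \<in> D"
      hence "d \<le> Sup D" using bdd by (rule cSup_upper)
      also have "Sup D \<le> s - e" using e(3) by (simp add: le_diff_eq add.commute)
      finally show "d \<le> s - e" .
    qed
    ultimately have "s \<le> s - e" using least by blast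
    hence "e \<le> 0" by (simp add: le_diff_eq)
    thus ?thesis using e(2) by simp
  qed
qed

lemma L1:
  assumes "c0 \<in> X" "c0 \<le> a"
  shows "Sup {c\<in>X. c \<le> a} = a"
proof -
  define E where "E = {c\<in>X. c \<le> a}"
  have ne: "E \<noteq> {}" using assms by (auto simp: E_def)
  have bdd: "bdd_above E" by (rule bdd_aboveI[of _ a]) (auto simp: E_def)
  have le: "Sup E \<le> a" using ne by (intro cSup_least) (auto simp: E_def)
  show ?thesis
  proof (rule ccontr)
    assume "Sup {c\<in>X. c \<le> a} \<noteq> a"
    hence "0 < a - Sup E" using le by (simp add: less_le E_def)
    then obtain e where e: "e \<in> X" "0 < e" "e \<le> a - Sup E" using OD unfolding order_dense_def by blast
    have "\<forall>c\<in>E. c \<le> Sup E - e"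
    proof
      fix c assume c: "c \<in> E"
      have "c \<le> Sup E" using c bdd by (rule cSup_upper)
      hence "c + e \<le> Sup E + (a - Sup E)" using e(3) by (rule add_mono)
      hence "c + e \<in> E" using c e(1) by (auto simp: E_def Xadd)
      hence "c + e \<le> Sup E" using bdd by (rule cSup_upper)
      thus "c \<le> Sup E - e" by (simp add: le_diff_eq)
    qed
    hence "Sup E \<le> Sup E - e" using ne by (intro cSup_least) auto
    hence "e \<le> 0" by (simp add: le_diff_eq)
    thus False using e(2) by simp
  qed
qed

definition S where "S n N = sum x {n..N}"
definition W where "W m = sum x {..<m}"

lemma S_nonneg: "0 \<le> S n N" unfolding S_def using xpos by (simp add: sum_nonneg)
lemma W_nonneg: "0 \<le> W m" unfolding W_def using xpos by (simp add: sum_nonneg)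
lemma S_monoN: "N \<le> N' \<Longrightarrow> S n N \<le> S n N'" unfolding S_def using xpos
  by (intro sum_mono2) auto
lemma S_Suc: "S (Suc n) N \<le> S n N" unfolding S_def using xpos
  by (intro sum_mono2) auto
lemma W_mono: "m \<le> m' \<Longrightarrow> W m \<le> W m'" unfolding W_def using xpos
  by (intro sum_mono2) auto
lemma W_S: "W n + S n N = W (max n (Suc N))"
proof -
  have "{..<max n (Suc N)} = {..<n} \<union> {n..N}" by auto
  moreover have "{..<n} \<inter> {n..N} = {}" by auto
  ultimately show ?thesis unfolding W_def S_def by (simp add: sum.union_disjoint)
qed
lemma W_Suc: "W (Suc N) = S 0 N"
proof -
  have "{..<Suc N} = {0..N}" by auto
  thus ?thesis unfolding W_def S_def by simp
qed

lemma Tmem: "w \<in> sc_tail_sum X x n \<longleftrightarrow> w \<in> X \<and> (\<exists>N. w \<le> S n N)"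
  unfolding sc_tail_sum_def sc_emb_def S_def by auto

lemma T0: "0 \<in> sc_tail_sum X x n" using X0 S_nonneg by (auto simp: Tmem)

lemma F:
  assumes v: "v \<in> X"
  shows "Sup (inf v ` sc_tail_sum X x n) = Sup (range (\<lambda>N. inf v (S n N)))"
proof (rule antisym)
  have bdd1: "bdd_above (range (\<lambda>N. inf v (S n N)))" by (rule bdd_aboveI2[of _ _ v]) simp
  have bdd2: "bdd_above (inf v ` sc_tail_sum X x n)" by (rule bdd_aboveI2[of _ _ v]) simp
  show "Sup (inf v ` sc_tail_sum X x n) \<le> Sup (range (\<lambda>N. inf v (S n N)))"
  proof (rule cSup_least)
    show "inf v ` sc_tail_sum X x n \<noteq> {}" using T0 by auto
    fix z assume "z \<in> inf v ` sc_tail_sum X x n"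
    then obtain w N where w: "z = inf v w" "w \<le> S n N" by (auto simp: Tmem)
    have "z \<le> inf v (S n N)" using w by (simp add: inf.coboundedI2)
    also have "... \<le> Sup (range (\<lambda>N. inf v (S n N)))" using bdd1 by (intro cSup_upper) auto
    finally show "z \<le> Sup (range (\<lambda>N. inf v (S n N)))" .
  qed
  show "Sup (range (\<lambda>N. inf v (S n N))) \<le> Sup (inf v ` sc_tail_sum X x n)"
  proof (rule cSup_least)
    show "range (\<lambda>N. inf v (S n N)) \<noteq> {}" by auto
    fix z assume "z \<in> range (\<lambda>N. inf v (S n N))"
    then obtain N where z: "z = inf v (S n N)" by auto
    define E where "E = {c\<in>X. c \<le> S n N}"
    have ne: "E \<noteq> {}" using X0 S_nonneg by (auto simp: E_def)
    have bE: "bdd_above E" by (rule bdd_aboveI[of _ "S n N"]) (auto simp: E_def)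
    have "z = inf v (Sup E)" unfolding z E_def using X0 S_nonneg by (simp add: L1)
    also have "... = Sup (inf v ` E)" using ne bE by (rule inf_Sup)
    also have "... \<le> Sup (inf v ` sc_tail_sum X x n)"
      using ne bdd2 by (intro cSup_subset_mono image_mono) (auto simp: E_def Tmem)
    finally show "z \<le> Sup (inf v ` sc_tail_sum X x n)" .
  qed
qed

definition BU where "BU = sc_plus (sc_infty B) (sc_emb X u)"

lemma BUmem: "v \<in> BU \<longleftrightarrow> (\<exists>b c. v = b + c \<and> b \<in> B \<and> c \<in> X \<and> c \<le> u)"
  unfolding BU_def sc_plus_def sc_infty_def sc_emb_def by auto

lemma Hx: "v \<in> X \<Longrightarrow> Sup (range (\<lambda>N. inf v (S 0 N))) = Sup (inf v ` BU)"
  using H unfolding sc_eq_def BU_def by (simp add: F[symmetric])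

lemma BUne: "BU \<noteq> {}" using H unfolding sc_eq_def up_directed_def BU_def by simp

lemma c0ex: "\<exists>c0. c0 \<in> X \<and> c0 \<le> u" using BUne by (auto simp: BUmem)

lemma Bsub: "B \<subseteq> X" using band unfolding band_of_def by simp
lemma B0: "0 \<in> B" using band unfolding band_of_def by simp
lemma Bscale: "a \<in> B \<Longrightarrow> c *\<^sub>R a \<in> B" using band unfolding band_of_def by simp

lemma Gbdd: "bdd_above (inf v ` BU)" by (rule bdd_aboveI2[of _ _ v]) simp

lemma G0: assumes "v \<in> X" "0 \<le> v" shows "0 \<le> Sup (inf v ` BU)"
proof -
  have "0 \<le> inf v (S 0 0)" using assms S_nonneg by simp
  also have "... \<le> Sup (range (\<lambda>N. inf v (S 0 N)))"
    by (rule cSup_upper) (auto intro: bdd_aboveI2[of _ _ v])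
  finally show ?thesis using Hx[OF assms(1)] by simp
qed

lemma G_lower_B:
  assumes pB: "p \<in> B" and p0: "0 \<le> p"
  shows "p \<le> Sup (inf p ` BU)"
proof -
  define g where "g = Sup (inf p ` BU)"
  have pX: "p \<in> X" using pB Bsub by auto
  have g0: "0 \<le> g" unfolding g_def using pX p0 by (rule G0)
  have gp: "g \<le> p" unfolding g_def using BUne by (intro cSup_least) auto
  obtain c0 where c0: "c0 \<in> X" "c0 \<le> u" using c0ex by blast
  define r where "r = p - g"
  have r0: "0 \<le> r" using gp by (simp add: r_def)
  have rp: "r \<le> p" using g0 by (simp add: r_def)
  have "r \<le> 0"
  proof (rule lemmaK[OF r0 rp])
    fix j :: nat
    define b where "b = of_nat (Suc j) *\<^sub>R p"
    have "b + c0 \<in> BU" unfolding BUmem b_def using c0 pB Bscale by blast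
    hence "inf p (b + c0) \<le> g" unfolding g_def using Gbdd by (intro cSup_upper) auto
    hence "r \<le> p - inf p (b + c0)" by (simp add: r_def)
    also have "... = sup (p - (b + c0)) 0" by (rule minus_inf)
    also have "p - (b + c0) = - c0 - of_nat j *\<^sub>R p"
      by (simp add: b_def scaleR_left_distrib algebra_simps)
    finally show "r \<le> sup (- c0 - of_nat j *\<^sub>R p) 0" .
  qed
  thus ?thesis by (simp add: r_def g_def)
qed

lemma G_lower_u:
  assumes vX: "v \<in> X" and v0: "0 \<le> v"
  shows "inf v (sup u 0) \<le> Sup (inf v ` BU)"
proof -
  obtain c0 where c0: "c0 \<in> X" "c0 \<le> u" using c0ex by blast
  define E where "E = {c\<in>X. c \<le> u}"
  have ne: "E \<noteq> {}" using c0 by (auto simp: E_def)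
  have bE: "bdd_above E" by (rule bdd_aboveI[of _ u]) (auto simp: E_def)
  have EBU: "E \<subseteq> BU"
  proof
    fix c assume "c \<in> E"
    hence "c = 0 + c \<and> 0 \<in> B \<and> c \<in> X \<and> c \<le> u" using B0 by (simp add: E_def)
    thus "c \<in> BU" unfolding BUmem by blast
  qed
  have "inf v u = inf v (Sup E)" unfolding E_def using c0 by (simp add: L1)
  also have "... = Sup (inf v ` E)" using ne bE by (rule inf_Sup)
  also have "... \<le> Sup (inf v ` BU)" using ne EBU by (intro cSup_subset_mono Gbdd) auto
  finally have 1: "inf v u \<le> Sup (inf v ` BU)" .
  have "inf v (sup u 0) = sup (inf v u) (inf v 0)" by (rule distrib2)
  also have "inf v 0 = 0" using v0 by (rule inf.absorb2)
  finally show ?thesis using 1 G0[OF vX v0] by simp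
qed

lemma G_upper_d:
  assumes dX: "d \<in> X" and d0: "0 \<le> d" and dd: "\<forall>b\<in>B. disj d b"
  shows "Sup (inf (of_nat k *\<^sub>R d) ` BU) \<le> inf (of_nat k *\<^sub>R d) (sup u 0)"
proof (rule cSup_least)
  show "inf (of_nat k *\<^sub>R d) ` BU \<noteq> {}" using BUne by simp
  define kd where "kd = of_nat k *\<^sub>R d"
  have kd0: "0 \<le> kd" unfolding kd_def using d0 by (rule scaleR_nonneg_nonneg[rotated]) simp
  have rd: "rabs d = d" unfolding rabs_def using d0 by (simp add: sup.absorb1 order_trans[of "-d" 0 d])
  fix z assume "z \<in> inf (of_nat k *\<^sub>R d) ` BU"
  then obtain b c where z: "z = inf kd (b + c)" and b: "b \<in> B" and c: "c \<in> X" "c \<le> u"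
    unfolding kd_def by (auto simp: BUmem)
  have "inf (rabs b) d = 0" using dd b rd unfolding disj_def by (simp add: inf.commute)
  hence bk: "inf (rabs b) kd = 0" unfolding kd_def using rabs_nonneg d0 by (intro disj_mult)
  have "b + c \<le> rabs b + sup c 0" unfolding rabs_def by (intro add_mono) simp_all
  hence "z \<le> inf kd (rabs b + sup c 0)" unfolding z by (rule inf_mono[OF order_refl])
  also have "... \<le> inf kd (rabs b) + inf kd (sup c 0)" using kd0 rabs_nonneg by (intro subadd) simp_all
  also have "inf kd (rabs b) = 0" using bk by (simp add: inf.commute)
  also have "inf kd (sup c 0) \<le> inf kd (sup u 0)" using c by (intro inf_mono sup_mono) simp_all
  finally show "z \<le> inf (of_nat k *\<^sub>R d) (sup u 0)" by (simp add: kd_def)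
qed


lemma C1:
  assumes b0B: "b0 \<in> B" and b00: "0 \<le> b0"
  shows "b0 \<le> Sup (range (\<lambda>N. inf b0 (S n N)))"
proof -
  define g where "g = Sup (range (\<lambda>N. inf b0 (S n N)))"
  have bdd: "bdd_above (range (\<lambda>N. inf b0 (S n N)))" by (rule bdd_aboveI2[of _ _ b0]) simp
  have gup: "\<And>N. inf b0 (S n N) \<le> g" unfolding g_def using bdd by (intro cSup_upper) auto
  have "0 \<le> inf b0 (S n 0)" using b00 S_nonneg[of n 0] by (rule le_infI)
  hence g0: "0 \<le> g" using gup[of 0] by (rule order_trans)
  have gb: "g \<le> b0" unfolding g_def by (intro cSup_least) auto
  define r where "r = b0 - g"
  have r0: "0 \<le> r" using gb by (simp add: r_def)
  have rb: "r \<le> b0" using g0 by (simp add: r_def)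
  have "r \<le> 0"
  proof (rule lemmaK[OF r0 rb])
    fix j :: nat
    define p where "p = of_nat (Suc j) *\<^sub>R b0"
    have pB: "p \<in> B" unfolding p_def using b0B by (rule Bscale)
    have pX: "p \<in> X" using pB Bsub by auto
    have p0: "0 \<le> p" unfolding p_def using b00 by (rule scaleR_nonneg_nonneg[rotated]) simp
    define m where "m = (\<lambda>N. inf p (S 0 N))"
    have bm: "bdd_above (range m)" unfolding m_def by (rule bdd_aboveI2[of _ _ p]) simp
    have Mp: "p \<le> Sup (range m)" unfolding m_def using Hx[OF pX] G_lower_B[OF pB p0] by simp
    have "\<And>N. r \<le> sup ((b0 + W n) - m N) 0"
    proof -
      fix N
      have "r \<le> b0 - inf b0 (S n N)" using gup[of N] by (simp add: r_def)
      also have "... = sup (b0 - S n N) 0" by (rule minus_inf)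
      also have "b0 - S n N \<le> (b0 + W n) - m N"
      proof -
        have "m N \<le> S 0 N" by (simp add: m_def)
        also have "S 0 N = W (Suc N)" by (simp add: W_Suc)
        also have "... \<le> W (max n (Suc N))" by (rule W_mono) simp
        also have "... = W n + S n N" by (simp add: W_S)
        finally have mle: "m N \<le> W n + S n N" .
        have "b0 - S n N = (b0 + W n) - (W n + S n N)" by (simp add: algebra_simps)
        also have "... \<le> (b0 + W n) - m N" using mle by (rule diff_left_mono)
        finally show ?thesis .
      qed
      hence "sup (b0 - S n N) 0 \<le> sup ((b0 + W n) - m N) 0" by (rule sup_mono) simp
      finally show "r \<le> sup ((b0 + W n) - m N) 0" .
    qed
    hence "r \<le> sup ((b0 + W n) - Sup (range m)) 0" using bm by (rule INFPOS)
    also have "... \<le> sup ((b0 + W n) - p) 0" using Mp by (intro sup_mono diff_left_mono) simp_all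
    also have "(b0 + W n) - p = W n - of_nat j *\<^sub>R b0" by (simp add: p_def scaleR_left_distrib algebra_simps)
    finally show "r \<le> sup (W n - of_nat j *\<^sub>R b0) 0" .
  qed
  thus ?thesis by (simp add: r_def g_def)
qed

lemma C2:
  assumes dX: "d \<in> X" and d0: "0 \<le> d" and dd: "\<forall>b\<in>B. disj d b"
    and t: "\<And>n. t \<le> Sup (range (\<lambda>N. inf d (S n N)))"
  shows "t \<le> 0"
proof -
  define a where "a = sup u 0"
  have a0: "0 \<le> a" by (simp add: a_def)
  have kdX: "\<And>k::nat. of_nat k *\<^sub>R d \<in> X" using dX by (rule Xscale)
  have kd0: "\<And>k::nat. 0 \<le> of_nat k *\<^sub>R d" using d0 by (simp add: scaleR_nonneg_nonneg)
  have Wb: "\<And>k m. inf (of_nat k *\<^sub>R d) (W m) \<le> a"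
  proof -
    fix k :: nat and m :: nat
    show "inf (of_nat k *\<^sub>R d) (W m) \<le> a"
    proof (cases m)
      case 0
      have "inf (of_nat k *\<^sub>R d) (W m) \<le> W m" by simp
      also have "W m = 0" using 0 by (simp add: W_def)
      finally show ?thesis using a0 by simp
    next
      case (Suc M)
      have "inf (of_nat k *\<^sub>R d) (W m) = inf (of_nat k *\<^sub>R d) (S 0 M)" using Suc by (simp add: W_Suc)
      also have "... \<le> Sup (range (\<lambda>N. inf (of_nat k *\<^sub>R d) (S 0 N)))"
        by (rule cSup_upper) (auto intro: bdd_aboveI2[of _ _ "of_nat k *\<^sub>R d"])
      also have "... = Sup (inf (of_nat k *\<^sub>R d) ` BU)" by (rule Hx[OF kdX])
      also have "... \<le> inf (of_nat k *\<^sub>R d) a" unfolding a_def by (rule G_upper_d[OF dX d0 dd])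
      also have "... \<le> a" by simp
      finally show ?thesis .
    qed
  qed
  have disjW: "\<And>m. inf (sup (W m - a) 0) d = 0"
  proof -
    fix m
    show "inf (sup (W m - a) 0) d = 0" by (rule disj_part[OF d0 a0]) (rule Wb)
  qed
  have zb: "\<And>n. Sup (range (\<lambda>N. inf d (S n N))) \<le> sup (a - W n) 0"
  proof -
    fix n
    show "Sup (range (\<lambda>N. inf d (S n N))) \<le> sup (a - W n) 0"
    proof (rule cSup_least)
      show "range (\<lambda>N. inf d (S n N)) \<noteq> {}" by auto
      fix z assume "z \<in> range (\<lambda>N. inf d (S n N))"
      then obtain N where z: "z = inf d (S n N)" by auto
      have "inf (sup (W n + S n N - a) 0) d = 0" using disjW[of "max n (Suc N)"] by (simp add: W_S)
      thus "z \<le> sup (a - W n) 0" unfolding z by (rule dpart_bound[OF d0 S_nonneg])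
    qed
  qed
  have bz: "\<And>n. bdd_above (range (\<lambda>N. inf d (S n N)))" by (rule bdd_aboveI2[of _ _ d]) simp
  have zn0: "\<And>n. 0 \<le> Sup (range (\<lambda>N. inf d (S n N)))"
  proof -
    fix n
    have "0 \<le> inf d (S n 0)" using d0 S_nonneg[of n 0] by (rule le_infI)
    also have "... \<le> Sup (range (\<lambda>N. inf d (S n N)))" using bz[of n] by (intro cSup_upper) auto
    finally show "0 \<le> Sup (range (\<lambda>N. inf d (S n N)))" .
  qed
  define r where "r = sup t 0"
  have rz: "\<And>n. r \<le> Sup (range (\<lambda>N. inf d (S n N)))"
    unfolding r_def using t zn0 by (rule le_supI)
  have r0: "0 \<le> r" by (simp add: r_def)
  have "Sup (range (\<lambda>N. inf d (S 0 N))) \<le> d" by (intro cSup_least) auto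
  hence rd: "r \<le> d" using rz[of 0] by (rule order_trans[rotated])
  have "r \<le> 0"
  proof (rule lemmaK[OF r0 rd])
    fix k :: nat
    define kd where "kd = of_nat k *\<^sub>R d"
    define m where "m = (\<lambda>n. inf kd (W n))"
    have bm: "bdd_above (range m)" unfolding m_def by (rule bdd_aboveI2[of _ _ kd]) simp
    have "\<And>n. r \<le> sup (a - m n) 0"
    proof -
      fix n
      have "r \<le> sup (a - W n) 0" using rz[of n] zb[of n] by (rule order_trans)
      also have "... \<le> sup (a - m n) 0" unfolding m_def by (intro sup_mono diff_left_mono) simp_all
      finally show "r \<le> sup (a - m n) 0" .
    qed
    hence "r \<le> sup (a - Sup (range m)) 0" using bm by (rule INFPOS)
    also have "... \<le> sup (a - inf kd a) 0"
    proof -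
      have "inf kd a \<le> Sup (inf kd ` BU)" unfolding a_def kd_def using kdX[of k] kd0[of k] by (rule G_lower_u)
      also have "... = Sup (range (\<lambda>N. inf kd (S 0 N)))" unfolding kd_def by (rule Hx[OF kdX, symmetric])
      also have "... \<le> Sup (range m)"
      proof (rule cSup_least)
        show "range (\<lambda>N. inf kd (S 0 N)) \<noteq> {}" by auto
        fix z assume "z \<in> range (\<lambda>N. inf kd (S 0 N))"
        then obtain N where "z = inf kd (S 0 N)" by auto
        hence "z = m (Suc N)" by (simp add: m_def W_Suc)
        thus "z \<le> Sup (range m)" using bm by (auto intro: cSup_upper)
      qed
      finally show ?thesis by (intro sup_mono diff_left_mono) simp_all
    qed
    also have "sup (a - inf kd a) 0 = sup (a - kd) 0"
    proof -
      have "a - inf kd a = a - inf a kd" by (simp add: inf.commute)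
      also have "... = sup (a - kd) 0" by (rule minus_inf)
      finally show ?thesis by (simp add: sup_assoc)
    qed
    finally show "r \<le> sup (a - of_nat k *\<^sub>R d) 0" by (simp add: kd_def)
  qed
  moreover have "t \<le> r" by (simp add: r_def)
  ultimately show "t \<le> 0" by simp
qed

end

lemma pos_part:
  fixes b d y :: "'a::{ordered_real_vector, lattice}"
  assumes "y = b + d" "0 \<le> y" "inf (rabs b) (rabs d) = 0"
  shows "0 \<le> b"
proof -
  have "0 \<le> b + d" using assms(1,2) by simp
  hence "-b + 0 \<le> -b + (b + d)" by (rule add_left_mono)
  hence "-b \<le> d" by simp
  also have "d \<le> rabs d" by (simp add: rabs_def)
  finally have 1: "-b \<le> rabs d" .
  have 2: "-b \<le> rabs b" by (simp add: rabs_def)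
  have "sup (-b) 0 \<le> inf (rabs b) (rabs d)"
    by (intro le_infI le_supI 1 2 rabs_nonneg)
  hence "-b \<le> 0" using assms(3) by simp
  thus ?thesis by simp
qed

theorem lemmaS3:
  fixes X B :: "'u::{ordered_real_vector, conditionally_complete_lattice} set"
    and x :: "nat \<Rightarrow> 'u" and u :: 'u and P :: "'u \<Rightarrow> 'u"
  assumes "universal_completion_of X"
    and "dedekind_complete_in X"
    and "\<forall>n. 0 \<le> x n"
    and "band_of X B"
    and "\<forall>b\<in>B. disj u b"
    and "sc_eq X (sc_tail_sum X x 0) (sc_plus (sc_infty B) (sc_emb X u))"
    and "band_projection X B P"
  shows "\<forall>y\<in>X. 0 \<le> y \<longrightarrow>
           (\<exists>z. (\<forall>n. z n \<in> X \<and> sc_eq X {z n} (sc_inf {y} (sc_tail_sum X x n))) \<and> order_conv z (P y))"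
proof -
  interpret c: ctx X B x u P using assms unfolding ctx_def by blast
  show ?thesis
  proof (intro ballI impI)
    fix y assume yX: "y \<in> X" and y0: "0 \<le> y"
    define b0 where "b0 = P y"
    define d where "d = y - P y"
    have b0B: "b0 \<in> B" and dC: "d \<in> disj_compl X B"
      using assms(7) yX unfolding band_projection_def b0_def d_def by auto
    have dX: "d \<in> X" and dd: "\<forall>b\<in>B. disj d b" using dC unfolding disj_compl_def by auto
    have yd: "y = b0 + d" by (simp add: b0_def d_def)
    have bd: "inf (rabs d) (rabs b0) = 0" using dd b0B unfolding disj_def by simp
    have b00: "0 \<le> b0" using yd y0 bd by (intro pos_part[of y b0 d]) (simp_all add: inf.commute)
    have d0: "0 \<le> d" using yd y0 bd by (intro pos_part[of y d b0]) (simp_all add: add.commute)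
    have b0y: "b0 \<le> y" using d0 yd by simp
    define z where "z = (\<lambda>n. Sup (inf y ` sc_tail_sum X x n))"
    have zr: "\<And>n. z n = Sup (range (\<lambda>N. inf y (c.S n N)))" unfolding z_def using yX by (rule c.F)
    have ne: "\<And>n. inf y ` sc_tail_sum X x n \<noteq> {}" using c.T0 by auto
    have bdy: "\<And>n. bdd_above (inf y ` sc_tail_sum X x n)" by (rule bdd_aboveI2[of _ _ y]) simp
    have subX: "\<And>n. inf y ` sc_tail_sum X x n \<subseteq> X" using yX by (auto simp: c.Tmem intro: c.Xinf)
    have zX: "\<And>n. z n \<in> X" unfolding z_def using subX ne yX by (rule c.regular) auto
    have sc: "\<And>n. sc_eq X {z n} (sc_inf {y} (sc_tail_sum X x n))"
    proof -
      fix n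
      have si: "sc_inf {y} (sc_tail_sum X x n) = inf y ` sc_tail_sum X x n" unfolding sc_inf_def by auto
      show "sc_eq X {z n} (sc_inf {y} (sc_tail_sum X x n))" unfolding sc_eq_def si
      proof (intro conjI ballI)
        show "{z n} \<subseteq> X" using zX by simp
        show "inf y ` sc_tail_sum X x n \<subseteq> X" by (rule subX)
        show "up_directed {z n}" unfolding up_directed_def by simp
        show "up_directed (inf y ` sc_tail_sum X x n)" unfolding up_directed_def
        proof (intro conjI ballI)
          show "inf y ` sc_tail_sum X x n \<noteq> {}" by (rule ne)
          fix a1 a2 assume a1: "a1 \<in> inf y ` sc_tail_sum X x n" and a2: "a2 \<in> inf y ` sc_tail_sum X x n"
          from a1 obtain w1 N1 where w1: "a1 = inf y w1" "w1 \<in> X" "w1 \<le> c.S n N1" by (auto simp: c.Tmem)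
          from a2 obtain w2 N2 where w2: "a2 = inf y w2" "w2 \<in> X" "w2 \<le> c.S n N2" by (auto simp: c.Tmem)
          have "w1 \<le> c.S n (max N1 N2)" using w1(3) c.S_monoN[of N1 "max N1 N2" n] by simp
          moreover have "w2 \<le> c.S n (max N1 N2)" using w2(3) c.S_monoN[of N2 "max N1 N2" n] by simp
          ultimately have "sup w1 w2 \<in> sc_tail_sum X x n" using w1(2) w2(2) by (auto simp: c.Tmem intro: c.Xsup)
          moreover have "a1 \<le> inf y (sup w1 w2)" unfolding w1(1) by (rule inf_mono[OF order_refl sup_ge1])
          moreover have "a2 \<le> inf y (sup w1 w2)" unfolding w2(1) by (rule inf_mono[OF order_refl sup_ge2])
          ultimately show "\<exists>c\<in>inf y ` sc_tail_sum X x n. a1 \<le> c \<and> a2 \<le> c" by blast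
        qed
        fix v assume vX: "v \<in> X"
        have "Sup (inf v ` {z n}) = inf v (z n)" by simp
        also have "... = Sup (inf v ` inf y ` sc_tail_sum X x n)" unfolding z_def using ne bdy by (rule inf_Sup)
        finally show "Sup (inf v ` {z n}) = Sup (inf v ` inf y ` sc_tail_sum X x n)" .
      qed
    qed
    define zp where "zp = (\<lambda>n. Sup (range (\<lambda>N. inf d (c.S n N))))"
    have bzy: "\<And>n. bdd_above (range (\<lambda>N. inf y (c.S n N)))" by (rule bdd_aboveI2[of _ _ y]) simp
    have bzd: "\<And>n. bdd_above (range (\<lambda>N. inf d (c.S n N)))" by (rule bdd_aboveI2[of _ _ d]) simp
    have lower: "\<And>n. b0 \<le> z n"
    proof -
      fix n
      have "b0 \<le> Sup (range (\<lambda>N. inf b0 (c.S n N)))" using b0B b00 by (rule c.C1)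
      also have "... \<le> z n" unfolding zr
      proof (rule cSup_least)
        show "range (\<lambda>N. inf b0 (c.S n N)) \<noteq> {}" by auto
        fix w assume "w \<in> range (\<lambda>N. inf b0 (c.S n N))"
        then obtain N where w: "w = inf b0 (c.S n N)" by auto
        have "w \<le> inf y (c.S n N)" unfolding w using b0y by (rule inf_mono) simp
        also have "... \<le> Sup (range (\<lambda>N. inf y (c.S n N)))" using bzy[of n] by (intro cSup_upper) auto
        finally show "w \<le> Sup (range (\<lambda>N. inf y (c.S n N)))" .
      qed
      finally show "b0 \<le> z n" .
    qed
    have upper: "\<And>n. z n \<le> b0 + zp n"
    proof -
      fix n
      show "z n \<le> b0 + zp n" unfolding zr
      proof (rule cSup_least)
        show "range (\<lambda>N. inf y (c.S n N)) \<noteq> {}" by auto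
        fix w assume "w \<in> range (\<lambda>N. inf y (c.S n N))"
        then obtain N where w: "w = inf y (c.S n N)" by auto
        have "w = inf (c.S n N) (b0 + d)" unfolding w yd by (simp add: inf.commute)
        also have "... \<le> inf (c.S n N) b0 + inf (c.S n N) d"
          using c.S_nonneg b00 d0 by (rule subadd)
        also have "... \<le> b0 + zp n"
        proof (rule add_mono)
          show "inf (c.S n N) b0 \<le> b0" by simp
          have "inf (c.S n N) d = inf d (c.S n N)" by (simp add: inf.commute)
          also have "... \<le> zp n" unfolding zp_def using bzd[of n] by (intro cSup_upper) auto
          finally show "inf (c.S n N) d \<le> zp n" .
        qed
        finally show "w \<le> b0 + zp n" .
      qed
    qed
    have dec: "\<And>n. z (Suc n) \<le> z n"
    proof -
      fix n
      show "z (Suc n) \<le> z n" unfolding zr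
      proof (rule cSup_least)
        show "range (\<lambda>N. inf y (c.S (Suc n) N)) \<noteq> {}" by auto
        fix w assume "w \<in> range (\<lambda>N. inf y (c.S (Suc n) N))"
        then obtain N where w: "w = inf y (c.S (Suc n) N)" by auto
        have "w \<le> inf y (c.S n N)" unfolding w using c.S_Suc by (rule inf_mono[OF order_refl])
        also have "... \<le> Sup (range (\<lambda>N. inf y (c.S n N)))" using bzy[of n] by (intro cSup_upper) auto
        finally show "w \<le> Sup (range (\<lambda>N. inf y (c.S n N)))" .
      qed
    qed
    show "\<exists>z. (\<forall>n. z n \<in> X \<and> sc_eq X {z n} (sc_inf {y} (sc_tail_sum X x n))) \<and> order_conv z (P y)"
    proof (intro exI conjI allI)
      fix n show "z n \<in> X" by (rule zX)
    next
      fix n show "sc_eq X {z n} (sc_inf {y} (sc_tail_sum X x n))" by (rule sc)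
    next
      show "order_conv z (P y)" unfolding order_conv_def
      proof (intro exI[of _ "\<lambda>n. z n - b0"] conjI allI)
        show "decseq (\<lambda>n. z n - b0)" unfolding decseq_Suc_iff using dec by (simp add: diff_right_mono)
        fix n show "0 \<le> z n - b0" using lower[of n] by simp
      next
        have bb: "bdd_below (range (\<lambda>n. z n - b0))"
          by (rule bdd_belowI2[of _ 0]) (simp add: lower)
        show "Inf (range (\<lambda>n. z n - b0)) = 0"
        proof (rule antisym)
          define t where "t = Inf (range (\<lambda>n. z n - b0))"
          have "\<And>n. t \<le> zp n"
          proof -
            fix n
            have "t \<le> z n - b0" unfolding t_def using bb by (intro cInf_lower) auto
            also have "... \<le> zp n" using upper[of n] by (simp add: diff_le_eq add.commute)
            finally show "t \<le> zp n" .
          qed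
          hence "t \<le> 0" using dX d0 dd unfolding zp_def by (intro c.C2[of d t]) auto
          thus "Inf (range (\<lambda>n. z n - b0)) \<le> 0" by (simp add: t_def)
          show "0 \<le> Inf (range (\<lambda>n. z n - b0))" by (intro cInf_greatest) (auto simp: lower)
        qed
      next
        fix n
        have h1: "0 \<le> z n - b0" using lower[of n] by simp
        have h2: "b0 - z n \<le> 0" using lower[of n] by simp
        from h2 h1 have "b0 - z n \<le> z n - b0" by (rule order_trans)
        hence "-(z n - b0) \<le> z n - b0" by (simp only: minus_diff_eq)
        hence "rabs (z n - b0) = z n - b0" unfolding rabs_def by (rule sup.absorb1)
        thus "rabs (z n - P y) \<le> z n - b0" by (simp add: b0_def)
      qed
    qed
  qed
qed


end
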